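(* Let $\varepsilon>0$, let $p_{m,n}=u(m\varepsilon)+iv(n\varepsilon)$ be a rectangular lattice and let $G$ be a CR-mapping on it. Define $Q_{m,n}=\frac{p_{m,n+1}-p_{m,n}}{p_{m,n}-p_{m-1,n}}\cdot\frac{G_{m,n}-G_{m-1,n}}{G_{m,n+1}-G_{m,n}}$ and let $F$ be defined by $Q=e^{\varepsilon F}$. Then, at every index $(m,n)$ where the quantities are defined, $$F_{m-1,n+1}-F_{m,n}=M\,(F_{m,n+1}-F_{m-1,n})+2i\varepsilon\,\Xi\,\frac{F_{m,n+1}+F_{m-1,n}}{2}+\varepsilon^2\mathcal R,$$ where, with $a=p_{m,n+1}-p_{m,n}$, $a'=p_{m,n+2}-p_{m,n+1}$, $b=p_{m,n}-p_{m-1,n}$, $b'=p_{m-1,n}-p_{m-2,n}$, $$M=-\frac{b\,b'-a\,a'}{(b'+a)(b+a')},\qquad \Xi=-\frac{b\,a-b'\,a'}{i\varepsilon\,(b'+a)(b+a')},$$ $$\mathcal R=\frac{1}{\varepsilon^3}\Big(\log\frac{a'e^{\varepsilon F_{m,n+1}}+b}{a'+b\,e^{\varepsilon F_{m,n+1}}}+\varepsilon\frac{b-a'}{b+a'}F_{m,n+1}-\log\frac{a\,e^{\varepsilon F_{m-1,n}}+b'}{a+b'e^{\varepsilon F_{m-1,n}}}-\varepsilon\frac{b'-a}{b'+a}F_{m-1,n}\Big).$$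
   Context: $u,v$ are real functions with positive derivatives (so the lattice $p_{m,n}=u(m\varepsilon)+iv(n\varepsilon)$ is a rectangular lattice in $\mathbb C$). The cross-ratio of distinct $q_1,\dots,q_4\in\mathbb C$ is $\mathrm{CR}(q_1,q_2,q_3,q_4)=\frac{(q_1-q_2)(q_3-q_4)}{(q_2-q_3)(q_4-q_1)}$. A CR-mapping $G$ on the lattice satisfies $\mathrm{CR}(G_{m-1,n},G_{m,n},G_{m,n+1},G_{m-1,n+1})=\mathrm{CR}(p_{m-1,n},p_{m,n},p_{m,n+1},p_{m-1,n+1})$ for all rectangles (with the $G$-values involved mutually distinct). In the identity, $F$ and $\log$ are taken with appropriate branches of the complex logarithm (the identity arises by taking the logarithm of a multiplicative identity for $Q$ and dividing by $\varepsilon$). *)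

theory Defs
  imports "HOL-Analysis.Analysis"
begin

definition lattice :: "(real \<Rightarrow> real) \<Rightarrow> (real \<Rightarrow> real) \<Rightarrow> real \<Rightarrow> int \<Rightarrow> int \<Rightarrow> complex" where
  "lattice u v \<epsilon> m n = complex_of_real (u (real_of_int m * \<epsilon>)) + \<i> * complex_of_real (v (real_of_int n * \<epsilon>))"

definition cross_ratio :: "complex \<Rightarrow> complex \<Rightarrow> complex \<Rightarrow> complex \<Rightarrow> complex" where
  "cross_ratio q1 q2 q3 q4 = ((q1 - q2) * (q3 - q4)) / ((q2 - q3) * (q4 - q1))"

definition cr_mapping :: "(real \<Rightarrow> real) \<Rightarrow> (real \<Rightarrow> real) \<Rightarrow> real \<Rightarrow> (int \<Rightarrow> int \<Rightarrow> complex) \<Rightarrow> bool" where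
  "cr_mapping u v \<epsilon> G \<longleftrightarrow>
     (\<forall>m n. distinct [G (m-1) n, G m n, G m (n+1), G (m-1) (n+1)] \<and>
        cross_ratio (G (m-1) n) (G m n) (G m (n+1)) (G (m-1) (n+1)) =
        cross_ratio (lattice u v \<epsilon> (m-1) n) (lattice u v \<epsilon> m n)
                    (lattice u v \<epsilon> m (n+1)) (lattice u v \<epsilon> (m-1) (n+1)))"

definition Qmap :: "(real \<Rightarrow> real) \<Rightarrow> (real \<Rightarrow> real) \<Rightarrow> real \<Rightarrow> (int \<Rightarrow> int \<Rightarrow> complex) \<Rightarrow> int \<Rightarrow> int \<Rightarrow> complex" where
  "Qmap u v \<epsilon> G m n =
     (lattice u v \<epsilon> m (n+1) - lattice u v \<epsilon> m n) / (lattice u v \<epsilon> m n - lattice u v \<epsilon> (m-1) n) *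
     ((G m n - G (m-1) n) / (G m (n+1) - G m n))"

end

theory Submission
  imports Defs
begin

lemma key:
 fixes a a' b b' g00 g10 g20 g01 g11 g21 g12 g22 :: complex
 assumes nz: "a \<noteq> 0" "a' \<noteq> 0" "b \<noteq> 0" "b' \<noteq> 0"
  and d1: "distinct [g00, g10, g11, g01]"
  and d2: "distinct [g10, g20, g21, g11]"
  and d3: "distinct [g11, g21, g22, g12]"
  and CR1: "(g10-g00)*(g11-g01)*a^2 = b'^2*(g11-g10)*(g01-g00)"
  and CR2: "(g20-g10)*(g21-g11)*a^2 = b^2*(g21-g20)*(g11-g10)"
  and CR3: "(g21-g11)*(g22-g12)*a'^2 = b^2*(g22-g21)*(g12-g11)"
 shows "(a' * (a'/b*((g21-g11)/(g22-g21))) + b) / (a' + b * (a'/b*((g21-g11)/(g22-g21))))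
          = a'*(g21-g11)/(b*(g12-g11))"
   and "(a * (a/b'*((g10-g00)/(g11-g10))) + b') / (a + b' * (a/b'*((g10-g00)/(g11-g10))))
          = a*(g10-g00)/(b'*(g01-g00))"
   and "(a'/b'*((g11-g01)/(g12-g11))) / (a/b*((g20-g10)/(g21-g20)))
          = (a'*(g21-g11)/(b*(g12-g11))) / (a*(g10-g00)/(b'*(g01-g00)))"
proof -
  from d1 d2 d3 have ne: "g10-g00 \<noteq> 0" "g11-g01 \<noteq> 0" "g11-g10\<noteq>0" "g01-g00\<noteq>0"
    "g20-g10\<noteq>0" "g21-g11\<noteq>0" "g21-g20\<noteq>0" "g22-g12\<noteq>0" "g22-g21\<noteq>0" "g12-g11\<noteq>0"
    "g22-g11\<noteq>0" "g11-g00\<noteq>0"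
    by auto
  show "(a' * (a'/b*((g21-g11)/(g22-g21))) + b) / (a' + b * (a'/b*((g21-g11)/(g22-g21))))
          = a'*(g21-g11)/(b*(g12-g11))"
  proof -
    have s: "a' + b * (a'/b*((g21-g11)/(g22-g21))) = a' * (g22-g11)/(g22-g21)"
      using nz ne by (simp add: field_simps; simp add: algebra_simps)
    have t: "a' * (a'/b*((g21-g11)/(g22-g21))) + b = (a'^2*(g21-g11) + b^2*(g22-g21))/(b*(g22-g21))"
      using nz ne by (simp add: field_simps power2_eq_square)
    have w: "b^2*(g22-g21) = a'^2*(g21-g11)*(g22-g12)/(g12-g11)"
      using CR3 ne by (simp add: field_simps)
    have t2: "a'^2*(g21-g11) + b^2*(g22-g21) = a'^2*(g21-g11)*(g22-g11)/(g12-g11)"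
      unfolding w using ne by (simp add: field_simps; simp add: algebra_simps)
    have "a'^2*(g21-g11)*(g22-g11)/(g12-g11)/(b*(g22-g21)) / (a' * (g22-g11)/(g22-g21))
       = a'*(g21-g11)/(b*(g12-g11))" using nz ne by (simp add: divide_simps power2_eq_square)
    then show ?thesis unfolding s t t2 .
  qed
  show "(a * (a/b'*((g10-g00)/(g11-g10))) + b') / (a + b' * (a/b'*((g10-g00)/(g11-g10))))
          = a*(g10-g00)/(b'*(g01-g00))"
  proof -
    have s: "a + b' * (a/b'*((g10-g00)/(g11-g10))) = a * (g11-g00)/(g11-g10)"
      using nz ne by (simp add: field_simps; simp add: algebra_simps)
    have t: "a * (a/b'*((g10-g00)/(g11-g10))) + b' = (a^2*(g10-g00) + b'^2*(g11-g10))/(b'*(g11-g10))"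
      using nz ne by (simp add: field_simps power2_eq_square)
    have w: "b'^2*(g11-g10) = a^2*(g10-g00)*(g11-g01)/(g01-g00)"
      using CR1 ne by (simp add: field_simps)
    have t2: "a^2*(g10-g00) + b'^2*(g11-g10) = a^2*(g10-g00)*(g11-g00)/(g01-g00)"
      unfolding w using ne by (simp add: field_simps; simp add: algebra_simps)
    have "a^2*(g10-g00)*(g11-g00)/(g01-g00)/(b'*(g11-g10)) / (a * (g11-g00)/(g11-g10))
       = a*(g10-g00)/(b'*(g01-g00))" using nz ne by (simp add: divide_simps power2_eq_square)
    then show ?thesis unfolding s t t2 .
  qed
  show "(a'/b'*((g11-g01)/(g12-g11))) / (a/b*((g20-g10)/(g21-g20)))
          = (a'*(g21-g11)/(b*(g12-g11))) / (a*(g10-g00)/(b'*(g01-g00)))"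
  proof -
    have e: "(g21-g11)*b'^2*(g01-g00)*(g20-g10) = b^2*(g10-g00)*(g11-g01)*(g21-g20)"
    proof -
      have "(g21-g11)*b'^2*(g01-g00)*(g20-g10)*a^2 = b'^2*(g01-g00)*((g20-g10)*(g21-g11)*a^2)" by (simp add: algebra_simps)
      also have "\<dots> = b'^2*(g01-g00)*(b^2*(g21-g20)*(g11-g10))" using CR2 by simp
      also have "\<dots> = b^2*(g21-g20)*(b'^2*(g11-g10)*(g01-g00))" by (simp add: algebra_simps)
      also have "\<dots> = b^2*(g21-g20)*((g10-g00)*(g11-g01)*a^2)" using CR1 by simp
      finally have "(g21-g11)*b'^2*(g01-g00)*(g20-g10)*a^2 = (b^2*(g10-g00)*(g11-g01)*(g21-g20))*a^2"
        by (simp add: algebra_simps)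
      thus ?thesis using nz by simp
    qed
    have L: "(a'/b'*((g11-g01)/(g12-g11))) / (a/b*((g20-g10)/(g21-g20)))
       = (a'*b*(g11-g01)*(g21-g20)) / (a*b'*(g12-g11)*(g20-g10))"
      using nz ne by (simp add: field_simps)
    have R: "(a'*(g21-g11)/(b*(g12-g11))) / (a*(g10-g00)/(b'*(g01-g00)))
       = (a'*b'*(g21-g11)*(g01-g00)) / (a*b*(g12-g11)*(g10-g00))"
      using nz ne by (simp add: field_simps)
    have "(a'*b*(g11-g01)*(g21-g20)) * (a*b*(g12-g11)*(g10-g00))
        = (a'*a*(g12-g11)) * (b^2*(g10-g00)*(g11-g01)*(g21-g20))"
      by (simp add: algebra_simps power2_eq_square)
    also have "\<dots> = (a'*a*(g12-g11)) * ((g21-g11)*b'^2*(g01-g00)*(g20-g10))" using e by simp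
    also have "\<dots> = (a'*b'*(g21-g11)*(g01-g00)) * (a*b'*(g12-g11)*(g20-g10))"
      by (simp add: algebra_simps power2_eq_square)
    finally have X: "(a'*b*(g11-g01)*(g21-g20)) * (a*b*(g12-g11)*(g10-g00))
        = (a'*b'*(g21-g11)*(g01-g00)) * (a*b'*(g12-g11)*(g20-g10))" .
    show ?thesis unfolding L R using nz ne X by (subst frac_eq_eq) auto
  qed
qed

lemma final:
  fixes e a a' b b' F1 F2 Fc Fd :: complex
  assumes e: "e \<noteq> 0" and s1: "b + a' \<noteq> 0" and s2: "b' + a \<noteq> 0"
    and X1: "(a' * exp (e * F1) + b) / (a' + b * exp (e * F1)) \<noteq> 0"
    and X2: "(a * exp (e * F2) + b') / (a + b' * exp (e * F2)) \<noteq> 0"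
    and E: "exp (e * Fd) / exp (e * Fc) = ((a' * exp (e * F1) + b) / (a' + b * exp (e * F1))) /
                ((a * exp (e * F2) + b') / (a + b' * exp (e * F2)))"
  shows "let M = - (b * b' - a * a') / ((b' + a) * (b + a'));
         \<Xi> = - (b * a - b' * a') / (\<i> * e * (b' + a) * (b + a'))
     in \<exists>k1 k2 :: int.
          let R = (1 / e ^ 3) *
                  ((Ln ((a' * exp (e * F1) + b) / (a' + b * exp (e * F1))) + 2 * pi * \<i> * of_int k1)
                   + e * (b - a') / (b + a') * F1
                   - (Ln ((a * exp (e * F2) + b') / (a + b' * exp (e * F2))) + 2 * pi * \<i> * of_int k2)
                   - e * (b' - a) / (b' + a) * F2)
          in Fd - Fc = M * (F1 - F2) + 2 * \<i> * e * \<Xi> * ((F1 + F2) / 2) + e ^ 2 * R"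
proof -
  define X1v where "X1v = (a' * exp (e * F1) + b) / (a' + b * exp (e * F1))"
  define X2v where "X2v = (a * exp (e * F2) + b') / (a + b' * exp (e * F2))"
  define M where "M = - (b * b' - a * a') / ((b' + a) * (b + a'))"
  define Xi where "Xi = - (b * a - b' * a') / (\<i> * e * (b' + a) * (b + a'))"
  have "exp (e * (Fd - Fc)) = exp (Ln X1v - Ln X2v)"
    using E X1 X2 unfolding X1v_def X2v_def by (simp add: exp_diff right_diff_distrib)
  then obtain k :: int where k: "e * (Fd - Fc) = Ln X1v - Ln X2v + of_int (2 * k) * pi * \<i>"
    unfolding exp_eq by blast
  have D: "(b' + a) * (b + a') \<noteq> 0" using s1 s2 by simp
  have iXi: "\<i> * e * Xi = - (b * a - b' * a') / ((b' + a) * (b + a'))"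
  proof -
    have "\<i> * e * Xi = (\<i> * e) * (- (b * a - b' * a')) / ((\<i> * e) * ((b' + a) * (b + a')))"
      unfolding Xi_def by (simp add: mult.assoc)
    also have "\<dots> = - (b * a - b' * a') / ((b' + a) * (b + a'))"
      using e by (subst mult_divide_mult_cancel_left) auto
    finally show ?thesis .
  qed
  have f1: "(b - a') / (b + a') = ((b - a') * (b' + a)) / ((b' + a) * (b + a'))"
    using s1 s2 by simp
  have f2: "(b' - a) / (b' + a) = ((b' - a) * (b + a')) / ((b' + a) * (b + a'))"
    using s1 s2 by simp
  have c1: "M + \<i> * e * Xi + (b - a') / (b + a') = 0"
    unfolding iXi f1 M_def add_divide_distrib[symmetric] minus_divide_left
    by (simp add: algebra_simps)
  have c2: "- M + \<i> * e * Xi - (b' - a) / (b' + a) = 0"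
    unfolding iXi f2 M_def add_divide_distrib[symmetric] minus_divide_left
      diff_divide_distrib[symmetric] minus_minus
    by (simp add: algebra_simps)
  have main: "Fd - Fc = M * (F1 - F2) + 2 * \<i> * e * Xi * ((F1 + F2) / 2) + e ^ 2 * ((1 / e ^ 3) *
                  ((Ln X1v + 2 * pi * \<i> * of_int k)
                   + e * (b - a') / (b + a') * F1
                   - (Ln X2v + 2 * pi * \<i> * of_int (0::int))
                   - e * (b' - a) / (b' + a) * F2))" (is "_ = ?R")
  proof -
    have "?R = F1 * (M + \<i> * e * Xi + (b - a') / (b + a')) + F2 * (- M + \<i> * e * Xi - (b' - a) / (b' + a))
             + (Ln X1v - Ln X2v + of_int (2 * k) * pi * \<i>) / e"
      using e by (simp add: field_simps power3_eq_cube power2_eq_square; simp add: algebra_simps)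
    also have "\<dots> = Fd - Fc" unfolding c1 c2 k[symmetric] using e by simp
    finally show ?thesis by simp
  qed
  show ?thesis unfolding Let_def
    apply (rule exI[of _ k], rule exI[of _ 0])
    using main unfolding X1v_def X2v_def M_def Xi_def by simp
qed


lemma lat_v: "lattice u v \<epsilon> j (k+1) - lattice u v \<epsilon> j k
   = \<i> * complex_of_real (v (real_of_int (k+1) * \<epsilon>) - v (real_of_int k * \<epsilon>))"
  unfolding lattice_def by (simp add: algebra_simps)

lemma lat_u: "lattice u v \<epsilon> j k - lattice u v \<epsilon> (j-1) k
   = complex_of_real (u (real_of_int j * \<epsilon>) - u (real_of_int (j-1) * \<epsilon>))"
  unfolding lattice_def by (simp add: algebra_simps)

lemma rect_cr:
  fixes j k :: int
  assumes CR: "cr_mapping u v \<epsilon> G"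
  defines "A \<equiv> \<i> * complex_of_real (v (real_of_int (k+1) * \<epsilon>) - v (real_of_int k * \<epsilon>))"
    and "B \<equiv> complex_of_real (u (real_of_int j * \<epsilon>) - u (real_of_int (j-1) * \<epsilon>))"
  shows "distinct [G (j-1) k, G j k, G j (k+1), G (j-1) (k+1)]" and "A \<noteq> 0" and "B \<noteq> 0"
    and "(G j k - G (j-1) k) * (G j (k+1) - G (j-1) (k+1)) * A^2
         = B^2 * (G j (k+1) - G j k) * (G (j-1) (k+1) - G (j-1) k)"
proof -
  from CR have d: "distinct [G (j-1) k, G j k, G j (k+1), G (j-1) (k+1)]"
    and c: "cross_ratio (G (j-1) k) (G j k) (G j (k+1)) (G (j-1) (k+1)) =
        cross_ratio (lattice u v \<epsilon> (j-1) k) (lattice u v \<epsilon> j k)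
                    (lattice u v \<epsilon> j (k+1)) (lattice u v \<epsilon> (j-1) (k+1))"
    unfolding cr_mapping_def by blast+
  show "distinct [G (j-1) k, G j k, G j (k+1), G (j-1) (k+1)]" by (rule d)
  have p1: "lattice u v \<epsilon> (j-1) k - lattice u v \<epsilon> j k = - B"
    using lat_u[of u v \<epsilon> j k] unfolding B_def by (simp add: algebra_simps)
  have p2: "lattice u v \<epsilon> j (k+1) - lattice u v \<epsilon> (j-1) (k+1) = B"
    using lat_u[of u v \<epsilon> j "k+1"] unfolding B_def by simp
  have p3: "lattice u v \<epsilon> j k - lattice u v \<epsilon> j (k+1) = - A"
    using lat_v[of u v \<epsilon> j k] unfolding A_def by (simp add: algebra_simps)
  have p4: "lattice u v \<epsilon> (j-1) (k+1) - lattice u v \<epsilon> (j-1) k = A"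
    using lat_v[of u v \<epsilon> "j-1" k] unfolding A_def by simp
  have cp: "cross_ratio (lattice u v \<epsilon> (j-1) k) (lattice u v \<epsilon> j k)
                    (lattice u v \<epsilon> j (k+1)) (lattice u v \<epsilon> (j-1) (k+1)) = (B * B) / (A * A)"
    unfolding cross_ratio_def p1 p2 p3 p4 by simp
  have ne: "G (j-1) k - G j k \<noteq> 0" "G j (k+1) - G (j-1) (k+1) \<noteq> 0"
     "G j k - G j (k+1) \<noteq> 0" "G (j-1) (k+1) - G (j-1) k \<noteq> 0" using d by auto
  have cg: "cross_ratio (G (j-1) k) (G j k) (G j (k+1)) (G (j-1) (k+1)) \<noteq> 0"
    unfolding cross_ratio_def using ne by simp
  have "(B * B) / (A * A) \<noteq> 0" using c cg cp by simp
  then show A: "A \<noteq> 0" and B: "B \<noteq> 0" by auto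
  have "((G (j-1) k - G j k) * (G j (k+1) - G (j-1) (k+1))) / ((G j k - G j (k+1)) * (G (j-1) (k+1) - G (j-1) k))
     = (B * B) / (A * A)" using c cp unfolding cross_ratio_def by simp
  then have "((G (j-1) k - G j k) * (G j (k+1) - G (j-1) (k+1))) * (A * A) = (B * B) * ((G j k - G j (k+1)) * (G (j-1) (k+1) - G (j-1) k))"
    using ne A B by (simp add: frac_eq_eq)
  then show "(G j k - G (j-1) k) * (G j (k+1) - G (j-1) (k+1)) * A^2
         = B^2 * (G j (k+1) - G j k) * (G (j-1) (k+1) - G (j-1) k)"
    by (simp add: algebra_simps power2_eq_square)
qed

lemma rect_all:
  fixes j k :: int
  assumes CR: "cr_mapping u v \<epsilon> G"
  shows "distinct [G (j-1) k, G j k, G j (k+1), G (j-1) (k+1)] \<and>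
    \<i> * complex_of_real (v (real_of_int (k+1) * \<epsilon>) - v (real_of_int k * \<epsilon>)) \<noteq> 0 \<and>
    complex_of_real (u (real_of_int j * \<epsilon>) - u (real_of_int (j-1) * \<epsilon>)) \<noteq> 0 \<and>
    (G j k - G (j-1) k) * (G j (k+1) - G (j-1) (k+1)) * (\<i> * complex_of_real (v (real_of_int (k+1) * \<epsilon>) - v (real_of_int k * \<epsilon>)))^2
         = (complex_of_real (u (real_of_int j * \<epsilon>) - u (real_of_int (j-1) * \<epsilon>)))^2 * (G j (k+1) - G j k) * (G (j-1) (k+1) - G (j-1) k)"
  using rect_cr(1)[where j=j and k=k, OF CR] rect_cr(2)[where k=k, OF CR] rect_cr(3)[where j=j, OF CR] rect_cr(4)[where j=j and k=k, OF CR] by blast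

lemma Qeq: "Qmap u v \<epsilon> G j k =
   \<i> * complex_of_real (v (real_of_int (k+1) * \<epsilon>) - v (real_of_int k * \<epsilon>)) /
   complex_of_real (u (real_of_int j * \<epsilon>) - u (real_of_int (j-1) * \<epsilon>)) *
   ((G j k - G (j-1) k) / (G j (k+1) - G j k))"
  unfolding Qmap_def lat_u lat_v ..

theorem theorem3p1:
  fixes u v :: "real \<Rightarrow> real" and \<epsilon> :: real
    and G F :: "int \<Rightarrow> int \<Rightarrow> complex" and m n :: int
  assumes eps: "\<epsilon> > 0"
    and u_deriv: "\<forall>x. u differentiable (at x) \<and> deriv u x > 0"
    and v_deriv: "\<forall>x. v differentiable (at x) \<and> deriv v x > 0"
    and CR: "cr_mapping u v \<epsilon> G"
    and F_def: "\<forall>j k. exp (complex_of_real \<epsilon> * F j k) = Qmap u v \<epsilon> G j k"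
  shows
    "let p = lattice u v \<epsilon>; e = complex_of_real \<epsilon>;
         a = p m (n+1) - p m n; a' = p m (n+2) - p m (n+1);
         b = p m n - p (m-1) n; b' = p (m-1) n - p (m-2) n;
         F1 = F m (n+1); F2 = F (m-1) n;
         M = - (b * b' - a * a') / ((b' + a) * (b + a'));
         \<Xi> = - (b * a - b' * a') / (\<i> * e * (b' + a) * (b + a'))
     in \<exists>k1 k2 :: int.
          let R = (1 / e ^ 3) *
                  ((Ln ((a' * exp (e * F1) + b) / (a' + b * exp (e * F1))) + 2 * pi * \<i> * of_int k1)
                   + e * (b - a') / (b + a') * F1
                   - (Ln ((a * exp (e * F2) + b') / (a + b' * exp (e * F2))) + 2 * pi * \<i> * of_int k2)
                   - e * (b' - a) / (b' + a) * F2)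
          in F (m-1) (n+1) - F m n = M * (F1 - F2) + 2 * \<i> * e * \<Xi> * ((F1 + F2) / 2) + e ^ 2 * R"
proof -
  define Av where "Av k = \<i> * complex_of_real (v (real_of_int (k+1) * \<epsilon>) - v (real_of_int k * \<epsilon>))" for k :: int
  define Bu where "Bu j = complex_of_real (u (real_of_int j * \<epsilon>) - u (real_of_int (j-1) * \<epsilon>))" for j :: int
  have i1: "m - 1 - 1 = m - 2" "n + 1 + 1 = n + 2" by simp_all
  have ha: "lattice u v \<epsilon> m (n+1) - lattice u v \<epsilon> m n = Av n"
    unfolding Av_def by (rule lat_v)
  have ha': "lattice u v \<epsilon> m (n+2) - lattice u v \<epsilon> m (n+1) = Av (n+1)"
    using lat_v[of u v \<epsilon> m "n+1"] unfolding Av_def i1 by simp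
  have hb: "lattice u v \<epsilon> m n - lattice u v \<epsilon> (m-1) n = Bu m"
    unfolding Bu_def by (rule lat_u)
  have hb': "lattice u v \<epsilon> (m-1) n - lattice u v \<epsilon> (m-2) n = Bu (m-1)"
    using lat_u[of u v \<epsilon> "m-1" n] unfolding Bu_def i1 by simp
  note r1 = rect_all[OF CR, of "m-1" n, folded Av_def Bu_def, unfolded i1]
  note r2 = rect_all[OF CR, of m n, folded Av_def Bu_def, unfolded i1]
  note r3 = rect_all[OF CR, of m "n+1", folded Av_def Bu_def, unfolded i1]
  have Av1: "\<i> * complex_of_real (v (real_of_int (n + 1 + 1) * \<epsilon>) - v (real_of_int (n + 1) * \<epsilon>)) = Av (n+1)"
    unfolding Av_def by simp
  have Bu1: "complex_of_real (u (real_of_int (m - 1) * \<epsilon>) - u (real_of_int (m - 1 - 1) * \<epsilon>)) = Bu (m-1)"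
    unfolding Bu_def by simp
  have q1: "Qmap u v \<epsilon> G m (n+1) = Av (n+1) / Bu m * ((G m (n+1) - G (m-1) (n+1)) / (G m (n+2) - G m (n+1)))"
    unfolding Qeq Av1[unfolded i1] Bu_def i1 by simp
  have q2: "Qmap u v \<epsilon> G (m-1) n = Av n / Bu (m-1) * ((G (m-1) n - G (m-2) n) / (G (m-1) (n+1) - G (m-1) n))"
    unfolding Qeq Bu1[unfolded i1] Av_def i1 by simp
  have qc: "Qmap u v \<epsilon> G m n = Av n / Bu m * ((G m n - G (m-1) n) / (G m (n+1) - G m n))"
    unfolding Qeq Av_def Bu_def by simp
  have qd: "Qmap u v \<epsilon> G (m-1) (n+1) = Av (n+1) / Bu (m-1) * ((G (m-1) (n+1) - G (m-2) (n+1)) / (G (m-1) (n+2) - G (m-1) (n+1)))"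
    unfolding Qeq Av1[unfolded i1] Bu1[unfolded i1] i1 by simp
  note K = key[of "Av n" "Av (n+1)" "Bu m" "Bu (m-1)" "G (m-2) n" "G (m-1) n" "G (m-1) (n+1)" "G (m-2) (n+1)"
      "G m n" "G m (n+1)" "G m (n+2)" "G (m-1) (n+2)", OF r2[THEN conjunct2, THEN conjunct1] r3[THEN conjunct2, THEN conjunct1] r2[THEN conjunct2, THEN conjunct2, THEN conjunct1] r1[THEN conjunct2, THEN conjunct2, THEN conjunct1] r1[THEN conjunct1] r2[THEN conjunct1] r3[THEN conjunct1] r1[THEN conjunct2, THEN conjunct2, THEN conjunct2] r2[THEN conjunct2, THEN conjunct2, THEN conjunct2] r3[THEN conjunct2, THEN conjunct2, THEN conjunct2]]
  have e: "complex_of_real \<epsilon> \<noteq> 0" using eps by simp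
  have s1: "Bu m + Av (n+1) \<noteq> 0"
  proof
    assume "Bu m + Av (n+1) = 0"
    then have "Re (Bu m + Av (n+1)) = 0" by simp
    then have "Bu m = 0" unfolding Bu_def Av_def by simp
    with r2[THEN conjunct2, THEN conjunct2, THEN conjunct1] show False by simp
  qed
  have s2: "Bu (m-1) + Av n \<noteq> 0"
  proof
    assume "Bu (m-1) + Av n = 0"
    then have "Re (Bu (m-1) + Av n) = 0" by simp
    then have "Bu (m-1) = 0" unfolding Bu_def Av_def by simp
    with r1[THEN conjunct2, THEN conjunct2, THEN conjunct1] show False by simp
  qed
  have dd: "G m (n+1) - G (m-1) (n+1) \<noteq> 0" "G (m-1) (n+2) - G (m-1) (n+1) \<noteq> 0"
     "G (m-1) n - G (m-2) n \<noteq> 0" "G (m-2) (n+1) - G (m-2) n \<noteq> 0"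
    using r1[THEN conjunct1] r2[THEN conjunct1] r3[THEN conjunct1] by auto
  have F1: "exp (complex_of_real \<epsilon> * F m (n+1)) = Qmap u v \<epsilon> G m (n+1)" using F_def by blast
  have F2: "exp (complex_of_real \<epsilon> * F (m-1) n) = Qmap u v \<epsilon> G (m-1) n" using F_def by blast
  have Fc: "exp (complex_of_real \<epsilon> * F m n) = Qmap u v \<epsilon> G m n" using F_def by blast
  have Fd: "exp (complex_of_real \<epsilon> * F (m-1) (n+1)) = Qmap u v \<epsilon> G (m-1) (n+1)" using F_def by blast
  have X1: "(Av (n+1) * exp (complex_of_real \<epsilon> * F m (n+1)) + Bu m) / (Av (n+1) + Bu m * exp (complex_of_real \<epsilon> * F m (n+1))) \<noteq> 0"
    unfolding F1 q1 K(1) using dd r2[THEN conjunct2, THEN conjunct2, THEN conjunct1] r3[THEN conjunct2, THEN conjunct1] by simp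
  have X2: "(Av n * exp (complex_of_real \<epsilon> * F (m-1) n) + Bu (m-1)) / (Av n + Bu (m-1) * exp (complex_of_real \<epsilon> * F (m-1) n)) \<noteq> 0"
    unfolding F2 q2 K(2) using dd r1[THEN conjunct2, THEN conjunct2, THEN conjunct1] r2[THEN conjunct2, THEN conjunct1] by simp
  have E: "exp (complex_of_real \<epsilon> * F (m-1) (n+1)) / exp (complex_of_real \<epsilon> * F m n) =
     ((Av (n+1) * exp (complex_of_real \<epsilon> * F m (n+1)) + Bu m) / (Av (n+1) + Bu m * exp (complex_of_real \<epsilon> * F m (n+1)))) /
     ((Av n * exp (complex_of_real \<epsilon> * F (m-1) n) + Bu (m-1)) / (Av n + Bu (m-1) * exp (complex_of_real \<epsilon> * F (m-1) n)))"
    unfolding F1 F2 Fc Fd q1 q2 qc qd K(1) K(2) using K(3) by simp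
  show ?thesis unfolding Let_def ha ha' hb hb'
    by (rule final[OF e s1 s2 X1 X2 E, unfolded Let_def])
qed

end
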